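(* Let $\mathbf{Z}\in\mathbb{R}^{n\times d}$ and $\lambda\geq 0$, and assume that $\lambda>0$ or that $\mathbf{Z}$ has full column rank. Let $s_{\lambda}(\mathbf{Z}):=\mathrm{Tr}\big((\mathbf{Z}^{T}\mathbf{Z}+\lambda\mathbf{I}_d)^{-1}\mathbf{Z}^{T}\mathbf{Z}\big)$. Let $\delta\in(0,1)$ and let $\mathbf{S}\in\mathbb{R}^{s\times n}$ be a CountSketch matrix with $s\geq 20\,s_{\lambda}(\mathbf{Z})^{2}/\delta$. Then with probability at least $1-\delta$, all generalized eigenvalues of the pencil $(\mathbf{Z}^{T}\mathbf{Z}+\lambda\mathbf{I}_d,\ \mathbf{Z}^{T}\mathbf{S}^{T}\mathbf{S}\mathbf{Z}+\lambda\mathbf{I}_d)$ lie in the interval $[1/2,3/2]$, and $\kappa(\mathbf{Z}^{T}\mathbf{Z}+\lambda\mathbf{I}_d,\ \mathbf{Z}^{T}\mathbf{S}^{T}\mathbf{S}\mathbf{Z}+\lambda\mathbf{I}_d)\leq 3$.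
   Context: A CountSketch matrix $\mathbf{S}\in\mathbb{R}^{s\times n}$ is defined by a random hash function $h:\{1,\dots,n\}\to\{1,\dots,s\}$ and a random sign function $g:\{1,\dots,n\}\to\{-1,+1\}$: the $j$-th column of $\mathbf{S}$ has a single nonzero entry, equal to $g(j)$, in row $h(j)$; equivalently $(\mathbf{S}\mathbf{x})_i=\sum_{j:h(j)=i}g(j)x_j$. For a pencil $(\mathbf{A},\mathbf{B})$ with $\mathbf{B}$ symmetric positive definite, the generalized eigenvalues are the $\lambda$ with $\mathbf{A}\mathbf{v}=\lambda\mathbf{B}\mathbf{v}$ for some $\mathbf{v}\neq 0$, and $\kappa(\mathbf{A},\mathbf{B})$ denotes the ratio of the largest to the smallest generalized eigenvalue in absolute value (equal to $\kappa(\mathbf{B}^{-1/2}\mathbf{A}\mathbf{B}^{-1/2})$). *)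

theory Defs
  imports "HOL-Analysis.Analysis" "HOL-Probability.Probability"
begin

definition countsketch :: "('n::finite \<Rightarrow> 's::finite) \<Rightarrow> ('n \<Rightarrow> bool) \<Rightarrow> real^'n^'s" where
  "countsketch h g = (\<chi> i j. if h j = i then (if g j then 1 else -1) else 0)"

definition countsketch_pmf :: "(('n::finite \<Rightarrow> 's::finite) \<times> ('n \<Rightarrow> bool)) pmf" where
  "countsketch_pmf = pmf_of_set UNIV"

definition gen_eigenvalues :: "real^'d^'d \<Rightarrow> real^'d^'d \<Rightarrow> real set" where
  "gen_eigenvalues A B = {\<mu>. \<exists>v. v \<noteq> 0 \<and> A *v v = \<mu> *\<^sub>R (B *v v)}"

definition pencil_kappa :: "real^'d^'d \<Rightarrow> real^'d^'d \<Rightarrow> real" where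
  "pencil_kappa A B = Max (abs ` gen_eigenvalues A B) / Min (abs ` gen_eigenvalues A B)"

definition pos_def :: "real^'d^'d \<Rightarrow> bool" where
  "pos_def B \<longleftrightarrow> transpose B = B \<and> (\<forall>v. v \<noteq> 0 \<longrightarrow> v \<bullet> (B *v v) > 0)"

definition stat_dim :: "real^'d^'n \<Rightarrow> real \<Rightarrow> real" where
  "stat_dim Z lam = trace (matrix_inv (transpose Z ** Z + lam *\<^sub>R mat 1) ** (transpose Z ** Z))"

end

theory Submission
  imports Defs
begin


lemma transpose_diff: "transpose (X - Y) = transpose X - transpose (Y::'a::ring_1^'n^'m)"
  by (simp add: transpose_def vec_eq_iff)

lemma transpose_plus: "transpose (X + Y) = transpose X + transpose (Y::'a::semiring_1^'n^'m)"
  by (simp add: transpose_def vec_eq_iff)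

lemma dot_sym_mat:
  fixes M :: "real^'d^'d"
  assumes "transpose M = M"
  shows "x \<bullet> (M *v y) = y \<bullet> (M *v x)"
proof -
  have "x \<bullet> (M *v y) = (x v* M) \<bullet> y" by (simp add: dot_lmul_matrix)
  also have "x v* M = transpose M *v x" by simp
  finally show ?thesis using assms by (simp add: inner_commute)
qed

lemma quad_expand:
  fixes D :: "real^'d^'d"
  assumes "transpose D = D"
  shows "(v + t *\<^sub>R w) \<bullet> (D *v (v + t *\<^sub>R w)) = v \<bullet> (D *v v) + 2 * t * (w \<bullet> (D *v v)) + t^2 * (w \<bullet> (D *v w))"
proof -
  have s: "v \<bullet> (D *v w) = w \<bullet> (D *v v)" using dot_sym_mat[OF assms] .
  show ?thesis
    by (simp add: matrix_vector_right_distrib matrix_vector_mult_scaleR inner_add_left inner_add_right s power2_eq_square algebra_simps)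
qed

lemma lin_quad_zero:
  fixes a b :: real
  assumes "\<And>t. 2 * t * a + t^2 * b \<le> 0"
  shows "a = 0"
proof -
  define t where "t = a / (\<bar>b\<bar> + 1)"
  have pos: "\<bar>b\<bar> + 1 > 0" by simp
  have "2 * t * a + t^2 * b \<le> 0" by (rule assms)
  hence "(2 * t * a + t^2 * b) * (\<bar>b\<bar> + 1)^2 \<le> 0"
    by (simp add: mult_nonpos_nonneg)
  moreover have "(2 * t * a + t^2 * b) * (\<bar>b\<bar> + 1)^2 = a^2 * (2 * (\<bar>b\<bar> + 1) + b)"
  proof -
    have gen: "c \<noteq> 0 \<Longrightarrow> (2 * (a/c) * a + (a/c)^2 * b) * c^2 = a^2 * (2 * c + b)" for c :: real
      by (simp add: field_simps power2_eq_square)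
    show ?thesis unfolding t_def by (rule gen) (use pos in simp)
  qed
  ultimately have "a^2 * (2 * (\<bar>b\<bar> + 1) + b) \<le> 0" by simp
  moreover have "2 * (\<bar>b\<bar> + 1) + b > 0" by (cases "b \<ge> 0") auto
  ultimately have "a^2 \<le> 0" by (simp add: mult_le_0_iff)
  thus ?thesis by simp
qed

lemma pencil_nonempty:
  fixes A B :: "real^'d^'d"
  assumes symA: "transpose A = A" and pd: "pos_def B"
  shows "gen_eigenvalues A B \<noteq> {}"
proof -
  have symB: "transpose B = B" and posB: "\<And>v. v \<noteq> 0 \<Longrightarrow> v \<bullet> (B *v v) > 0"
    using pd by (auto simp: pos_def_def)
  define f where "f v = (v \<bullet> (A *v v)) / (v \<bullet> (B *v v))" for v :: "real^'d"
  let ?S = "sphere (0::real^'d) 1"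
  have cont: "continuous_on ?S f"
    unfolding f_def
    apply (intro continuous_intros continuous_on_compose2[OF matrix_vector_mult_linear_continuous_on])
    using posB by (metis less_irrefl norm_zero mem_sphere_0 zero_neq_one)
  obtain i :: 'd where True by simp
  have ne: "?S \<noteq> {}"
  proof -
    have "axis i (1::real) \<in> ?S" by simp
    thus ?thesis by blast
  qed
  obtain v0 where v0S: "v0 \<in> ?S" and v0max: "\<And>y. y \<in> ?S \<Longrightarrow> f y \<le> f v0"
    using continuous_attains_sup[OF compact_sphere ne cont] by blast
  define m where "m = f v0"
  have v0nz: "v0 \<noteq> 0" using v0S by auto
  have Bv0: "v0 \<bullet> (B *v v0) > 0" using posB v0nz by blast
  have eq0: "v0 \<bullet> (A *v v0) = m * (v0 \<bullet> (B *v v0))"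
    unfolding m_def f_def using Bv0 by simp
  have le: "u \<bullet> (A *v u) \<le> m * (u \<bullet> (B *v u))" for u
  proof (cases "u = 0")
    case True thus ?thesis by simp
  next
    case False
    define c where "c = inverse (norm u)"
    have c: "c > 0" using False by (simp add: c_def)
    have "(c *\<^sub>R u) \<in> ?S" using False by (simp add: c_def)
    hence "f (c *\<^sub>R u) \<le> m" using v0max m_def by simp
    moreover have "f (c *\<^sub>R u) = f u"
      using c by (simp add: f_def matrix_vector_mult_scaleR power2_eq_square)
    ultimately have "f u \<le> m" by simp
    moreover have "u \<bullet> (B *v u) > 0" using posB False by blast
    ultimately show ?thesis by (simp add: f_def divide_le_eq mult.commute)
  qed
  define D where "D = A - m *\<^sub>R B"
  have symD: "transpose D = D"
    unfolding D_def using symA symB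
    by (simp add: transpose_diff transpose_scalar)
  have Dv: "x \<bullet> (D *v x) = x \<bullet> (A *v x) - m * (x \<bullet> (B *v x))" for x
    unfolding D_def by (simp add: matrix_vector_mult_diff_rdistrib scaleR_matrix_vector_assoc[symmetric] inner_diff_right)
  have "w \<bullet> (D *v v0) = 0" for w
  proof (rule lin_quad_zero[where b = "w \<bullet> (D *v w)"])
    fix t :: real
    have "(v0 + t *\<^sub>R w) \<bullet> (D *v (v0 + t *\<^sub>R w)) \<le> 0" using le[of "v0 + t *\<^sub>R w"] Dv by simp
    moreover have "v0 \<bullet> (D *v v0) = 0" using Dv eq0 by simp
    ultimately show "2 * t * (w \<bullet> (D *v v0)) + t^2 * (w \<bullet> (D *v w)) \<le> 0"
      using quad_expand[OF symD, of v0 t w] by simp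
  qed
  hence "D *v v0 = 0" by (metis inner_eq_zero_iff)
  hence "A *v v0 = m *\<^sub>R (B *v v0)"
    unfolding D_def by (simp add: matrix_vector_mult_diff_rdistrib scaleR_matrix_vector_assoc[symmetric])
  thus ?thesis unfolding gen_eigenvalues_def using v0nz by blast
qed



lemma pencil_orth:
  fixes A B :: "real^'d^'d"
  assumes symA: "transpose A = A" and symB: "transpose B = B"
    and e1: "A *v v1 = m1 *\<^sub>R (B *v v1)" and e2: "A *v v2 = m2 *\<^sub>R (B *v v2)" and ne: "m1 \<noteq> m2"
  shows "v1 \<bullet> (B *v v2) = 0"
proof -
  have "v2 \<bullet> (A *v v1) = m1 * (v2 \<bullet> (B *v v1))" using e1 by simp
  moreover have "v1 \<bullet> (A *v v2) = m2 * (v1 \<bullet> (B *v v2))" using e2 by simp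
  moreover have "v2 \<bullet> (A *v v1) = v1 \<bullet> (A *v v2)" by (rule dot_sym_mat[OF symA])
  moreover have "v2 \<bullet> (B *v v1) = v1 \<bullet> (B *v v2)" by (rule dot_sym_mat[OF symB])
  ultimately have "m1 * (v1 \<bullet> (B *v v2)) = m2 * (v1 \<bullet> (B *v v2))" by metis
  hence "(m1 - m2) * (v1 \<bullet> (B *v v2)) = 0" by (simp add: left_diff_distrib)
  thus ?thesis using ne by simp
qed

lemma pencil_finite:
  fixes A B :: "real^'d^'d"
  assumes symA: "transpose A = A" and pd: "pos_def B"
  shows "finite (gen_eigenvalues A B)"
proof (rule ccontr)
  assume inf: "infinite (gen_eigenvalues A B)"
  have symB: "transpose B = B" and posB: "\<And>v. v \<noteq> 0 \<Longrightarrow> v \<bullet> (B *v v) > 0"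
    using pd by (auto simp: pos_def_def)
  define vv where "vv \<mu> = (SOME v. v \<noteq> 0 \<and> A *v v = \<mu> *\<^sub>R (B *v v))" for \<mu>
  have vv: "vv \<mu> \<noteq> 0 \<and> A *v vv \<mu> = \<mu> *\<^sub>R (B *v vv \<mu>)" if "\<mu> \<in> gen_eigenvalues A B" for \<mu>
    using that unfolding gen_eigenvalues_def vv_def by (metis (mono_tags, lifting) mem_Collect_eq someI_ex)
  obtain F where F: "finite F" "card F = CARD('d) + 1" "F \<subseteq> gen_eigenvalues A B"
    using infinite_arbitrarily_large[OF inf] by blast
  have injv: "inj_on vv F"
  proof (rule inj_onI)
    fix x y assume xy: "x \<in> F" "y \<in> F" "vv x = vv y"
    show "x = y"
    proof (rule ccontr)
      assume "x \<noteq> y"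
      hence "vv x \<bullet> (B *v vv y) = 0"
        using pencil_orth[OF symA symB, of "vv x" x "vv y" y] vv xy F(3) by blast
      moreover have "vv x \<bullet> (B *v vv x) > 0" using posB vv xy F(3) by blast
      ultimately show False using xy by simp
    qed
  qed
  have indep: "independent (vv ` F)"
  proof
    assume "dependent (vv ` F)"
    then obtain u where u: "\<exists>v\<in>vv ` F. u v \<noteq> 0" "(\<Sum>v\<in>vv ` F. u v *\<^sub>R v) = 0"
      using dependent_finite[of "vv ` F"] F(1) by auto
    then obtain w where w: "w \<in> vv ` F" "u w \<noteq> 0" by blast
    have "0 = (\<Sum>v\<in>vv ` F. u v *\<^sub>R v) \<bullet> (B *v w)" using u(2) by simp
    also have "\<dots> = (\<Sum>v\<in>vv ` F. u v * (v \<bullet> (B *v w)))" by (simp add: inner_sum_left)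
    also have "\<dots> = u w * (w \<bullet> (B *v w))"
    proof -
      have "(\<Sum>v\<in>vv ` F. u v * (v \<bullet> (B *v w))) = u w * (w \<bullet> (B *v w)) + (\<Sum>v\<in>vv ` F - {w}. u v * (v \<bullet> (B *v w)))"
        using F(1) w(1) by (simp add: sum.remove)
      moreover have "(\<Sum>v\<in>vv ` F - {w}. u v * (v \<bullet> (B *v w))) = 0"
      proof (rule sum.neutral, rule ballI)
        fix v assume v: "v \<in> vv ` F - {w}"
        then obtain x where x: "x \<in> F" "v = vv x" by blast
        obtain y where y: "y \<in> F" "w = vv y" using w(1) by blast
        have "x \<noteq> y" using v x y by blast
        hence "v \<bullet> (B *v w) = 0"
          using pencil_orth[OF symA symB, of v x w y] vv x y F(3) by blast
        thus "u v * (v \<bullet> (B *v w)) = 0" by simp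
      qed
      ultimately show ?thesis by simp
    qed
    finally have "u w * (w \<bullet> (B *v w)) = 0" by simp
    moreover have "w \<noteq> 0"
    proof -
      obtain y where y: "y \<in> F" "w = vv y" using w(1) by blast
      thus ?thesis using vv[of y] F(3) by auto
    qed
    ultimately show False using w(2) posB[of w] by simp
  qed
  have "card (vv ` F) \<le> DIM(real^'d)" using independent_bound[OF indep] by blast
  moreover have "card (vv ` F) = CARD('d) + 1" using card_image[OF injv] F(2) by simp
  ultimately show False by simp
qed



definition Zh :: "real^'d^'n \<Rightarrow> real \<Rightarrow> real^'d^('n + 'd)" where
  "Zh Z lam = (\<chi> m a. case m of Inl j \<Rightarrow> Z$j$a | Inr b \<Rightarrow> (if a = b then sqrt lam else 0))"

definition Rm :: "real^'d^'n \<Rightarrow> real \<Rightarrow> real^'d^'d \<Rightarrow> real^'n^('n + 'd)" where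
  "Rm Z lam G = Zh Z lam ** G ** transpose Z"

definition Mm :: "real^'d^'n \<Rightarrow> real \<Rightarrow> real^'d^'d \<Rightarrow> real^'n^'n \<Rightarrow> real^('n+'d)^('n + 'd)" where
  "Mm Z lam G C = Rm Z lam G ** C ** transpose (Rm Z lam G)"

definition Wm :: "real^'d^'n \<Rightarrow> real \<Rightarrow> real^'d^'d \<Rightarrow> real^'n^'n \<Rightarrow> real" where
  "Wm Z lam G C = (\<Sum>m\<in>UNIV. \<Sum>l\<in>UNIV. (Mm Z lam G C $ m $ l)^2)"

lemma sum_UNIV_sumtype:
  fixes f :: "'a::finite + 'b::finite \<Rightarrow> 'c::comm_monoid_add"
  shows "(\<Sum>m\<in>UNIV. f m) = (\<Sum>j\<in>UNIV. f (Inl j)) + (\<Sum>b\<in>UNIV. f (Inr b))"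
proof -
  have "(\<Sum>m\<in>UNIV. f m) = (\<Sum>m\<in>Inl ` UNIV \<union> Inr ` UNIV. f m)" by (simp add: UNIV_sum[symmetric])
  also have "\<dots> = (\<Sum>m\<in>Inl ` UNIV. f m) + (\<Sum>m\<in>Inr ` UNIV. f m)"
    by (rule sum.union_disjoint) auto
  also have "\<dots> = (\<Sum>j\<in>UNIV. f (Inl j)) + (\<Sum>b\<in>UNIV. f (Inr b))"
    by (simp add: sum.reindex)
  finally show ?thesis .
qed

lemma ZhZh:
  fixes Z :: "real^'d^'n"
  assumes "lam \<ge> 0"
  shows "transpose (Zh Z lam) ** Zh Z lam = transpose Z ** Z + lam *\<^sub>R mat 1"
proof -
  have "(transpose (Zh Z lam) ** Zh Z lam) $ a $ b = (transpose Z ** Z + lam *\<^sub>R mat 1) $ a $ b" for a b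
  proof -
    have "(transpose (Zh Z lam) ** Zh Z lam) $ a $ b = (\<Sum>m\<in>UNIV. Zh Z lam $ m $ a * Zh Z lam $ m $ b)"
      by (simp add: matrix_matrix_mult_def transpose_def)
    also have "\<dots> = (\<Sum>j\<in>UNIV. Z $ j $ a * Z $ j $ b) + (\<Sum>c\<in>UNIV. (if a = c then sqrt lam else 0) * (if b = c then sqrt lam else 0))"
      by (subst sum_UNIV_sumtype) (simp add: Zh_def)
    also have "(\<Sum>c\<in>UNIV. (if a = c then sqrt lam else 0) * (if b = c then sqrt lam else 0)) = (if a = b then lam else 0)"
    proof -
      have "(if a = c then sqrt lam else 0) * (if b = c then sqrt lam else 0) = (if a = b \<and> a = c then lam else 0)" for c
        using assms by auto
      hence "(\<Sum>c\<in>UNIV. (if a = c then sqrt lam else 0) * (if b = c then sqrt lam else 0)) = (\<Sum>c\<in>UNIV. if a = b \<and> a = c then lam else 0)"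
        by simp
      also have "\<dots> = (if a = b then lam else 0)" by (cases "a = b") auto
      finally show ?thesis .
    qed
    finally show ?thesis
      by (simp add: matrix_matrix_mult_def transpose_def mat_def)
  qed
  thus ?thesis by (simp add: vec_eq_iff)
qed

lemma quad_ZhZh:
  fixes Z :: "real^'d^'n"
  assumes "lam \<ge> 0"
  shows "(Zh Z lam *v v) \<bullet> (Zh Z lam *v v) = v \<bullet> ((transpose Z ** Z + lam *\<^sub>R mat 1) *v v)"
proof -
  have "(Zh Z lam *v v) \<bullet> (Zh Z lam *v v) = v \<bullet> (transpose (Zh Z lam) *v (Zh Z lam *v v))"
    by (metis dot_lmul_matrix transpose_matrix_vector transpose_transpose)
  also have "\<dots> = v \<bullet> ((transpose Z ** Z + lam *\<^sub>R mat 1) *v v)"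
    by (simp add: matrix_vector_mul_assoc ZhZh[OF assms] del: transpose_matrix_vector)
  finally show ?thesis .
qed

lemma dot_transpose_move:
  fixes R :: "real^'a^'b"
  shows "x \<bullet> (R *v y) = (transpose R *v x) \<bullet> y"
  by (metis dot_lmul_matrix transpose_matrix_vector)

lemma Rt_Zh:
  fixes Z :: "real^'d^'n"
  assumes "lam \<ge> 0" and GA: "G ** (transpose Z ** Z + lam *\<^sub>R mat 1) = mat 1" and symG: "transpose G = G"
  shows "transpose (Rm Z lam G) *v (Zh Z lam *v v) = Z *v v"
proof -
  have "transpose (Rm Z lam G) = Z ** (G ** transpose (Zh Z lam))"
    unfolding Rm_def by (simp add: matrix_transpose_mul symG)
  hence "transpose (Rm Z lam G) *v (Zh Z lam *v v) = Z *v (G *v (transpose (Zh Z lam) *v (Zh Z lam *v v)))"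
    by (simp add: matrix_vector_mul_assoc[symmetric] del: transpose_matrix_vector)
  also have "\<dots> = Z *v ((G ** (transpose (Zh Z lam) ** Zh Z lam)) *v v)"
    by (simp add: matrix_vector_mul_assoc[symmetric] del: transpose_matrix_vector)
  also have "\<dots> = Z *v v" using GA by (simp add: ZhZh[OF assms(1)])
  finally show ?thesis .
qed

lemma key_quad:
  fixes Z :: "real^'d^'n" and C :: "real^'n^'n"
  assumes "lam \<ge> 0" and GA: "G ** (transpose Z ** Z + lam *\<^sub>R mat 1) = mat 1" and symG: "transpose G = G"
  shows "(Z *v v) \<bullet> (C *v (Z *v v)) = (Zh Z lam *v v) \<bullet> (Mm Z lam G C *v (Zh Z lam *v v))"
proof -
  let ?R = "Rm Z lam G" and ?y = "Zh Z lam *v v"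
  have "?y \<bullet> (Mm Z lam G C *v ?y) = ?y \<bullet> (?R *v (C *v (transpose ?R *v ?y)))"
    unfolding Mm_def by (simp add: matrix_vector_mul_assoc[symmetric] del: transpose_matrix_vector)
  also have "\<dots> = (transpose ?R *v ?y) \<bullet> (C *v (transpose ?R *v ?y))"
    by (rule dot_transpose_move)
  also have "\<dots> = (Z *v v) \<bullet> (C *v (Z *v v))" using Rt_Zh[OF assms] by simp
  finally show ?thesis by simp
qed

lemma sum_pairs:
  "(\<Sum>m\<in>UNIV. \<Sum>l\<in>UNIV. f (m, l)) = (\<Sum>p\<in>UNIV \<times> UNIV. (f p :: real))"
  by (simp add: sum.cartesian_product)

lemma quad_CS:
  fixes M :: "real^'a^'a"
  shows "(x \<bullet> (M *v x))^2 \<le> (\<Sum>m\<in>UNIV. \<Sum>l\<in>UNIV. (M$m$l)^2) * (x \<bullet> x)^2"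
proof -
  define a where "a p = M $ fst p $ snd p" for p
  define b where "b p = x $ fst p * x $ snd p" for p
  have "x \<bullet> (M *v x) = (\<Sum>m\<in>UNIV. \<Sum>l\<in>UNIV. a (m, l) * b (m, l))"
    unfolding a_def b_def
    by (simp add: inner_vec_def matrix_vector_mult_def sum_distrib_left algebra_simps)
  also have "\<dots> = (\<Sum>p\<in>UNIV \<times> UNIV. a p * b p)" by (rule sum_pairs)
  finally have e1: "x \<bullet> (M *v x) = (\<Sum>p\<in>UNIV \<times> UNIV. a p * b p)" .
  have "(\<Sum>m\<in>UNIV. \<Sum>l\<in>UNIV. (M$m$l)^2) = (\<Sum>m\<in>UNIV. \<Sum>l\<in>UNIV. (a (m,l))^2)"
    unfolding a_def by simp
  also have "\<dots> = (\<Sum>p\<in>UNIV \<times> UNIV. (a p)^2)" by (rule sum_pairs)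
  finally have e2: "(\<Sum>m\<in>UNIV. \<Sum>l\<in>UNIV. (M$m$l)^2) = (\<Sum>p\<in>UNIV \<times> UNIV. (a p)^2)" .
  have "(x \<bullet> x)^2 = (\<Sum>m\<in>UNIV. \<Sum>l\<in>UNIV. (b (m,l))^2)"
    unfolding b_def
    by (simp add: inner_vec_def power2_eq_square sum_product algebra_simps)
  also have "\<dots> = (\<Sum>p\<in>UNIV \<times> UNIV. (b p)^2)" by (rule sum_pairs)
  finally have e3: "(x \<bullet> x)^2 = (\<Sum>p\<in>UNIV \<times> UNIV. (b p)^2)" .
  show ?thesis unfolding e1 e2 e3 by (rule Cauchy_Schwarz_ineq_sum)
qed

lemma B_minus_A:
  fixes Z :: "real^'d^'n" and S :: "real^'n^'s"
  shows "v \<bullet> ((transpose Z ** transpose S ** S ** Z + lam *\<^sub>R mat 1) *v v)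
       = v \<bullet> ((transpose Z ** Z + lam *\<^sub>R mat 1) *v v) + (Z *v v) \<bullet> ((transpose S ** S - mat 1) *v (Z *v v))"
proof -
  have 1: "(transpose Z ** transpose S ** S ** Z + lam *\<^sub>R mat 1) *v v = transpose Z *v (transpose S *v (S *v (Z *v v))) + lam *\<^sub>R v"
    by (simp add: matrix_vector_mult_add_rdistrib matrix_vector_mul_assoc[symmetric] scaleR_matrix_vector_assoc[symmetric] del: transpose_matrix_vector)
  have 2: "(transpose Z ** Z + lam *\<^sub>R mat 1) *v v = transpose Z *v (Z *v v) + lam *\<^sub>R v"
    by (simp add: matrix_vector_mult_add_rdistrib matrix_vector_mul_assoc[symmetric] scaleR_matrix_vector_assoc[symmetric] del: transpose_matrix_vector)
  have 3: "(transpose S ** S - mat 1) *v y = transpose S *v (S *v y) - y" for y :: "real^'n"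
    by (simp add: matrix_vector_mult_diff_rdistrib matrix_vector_mul_assoc[symmetric] del: transpose_matrix_vector)
  show ?thesis unfolding 1 2 3
    by (simp add: inner_add_right inner_diff_right dot_transpose_move[of v "transpose Z"] del: transpose_matrix_vector)
qed



definition sg :: "bool \<Rightarrow> real" where "sg b = (if b then 1 else -1)"

definition cc :: "('n \<Rightarrow> 's) \<times> ('n \<Rightarrow> bool) \<Rightarrow> 'n \<Rightarrow> 'n \<Rightarrow> real" where
  "cc \<omega> j k = (if j \<noteq> k \<and> fst \<omega> j = fst \<omega> k then sg (snd \<omega> j) * sg (snd \<omega> k) else 0)"

lemma sg_sq [simp]: "sg b * sg b = 1" by (simp add: sg_def)

lemma cc_sym: "cc \<omega> k j = cc \<omega> j k" by (auto simp: cc_def)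

lemma cc_flip:
  "cc (h, g(i := \<not> g i)) j k = (if i = j \<or> i = k then - cc (h, g) j k else cc (h, g) j k)"
  by (auto simp: cc_def sg_def)

lemma flip_sum_zero:
  fixes F :: "('n::finite \<Rightarrow> 's::finite) \<times> ('n \<Rightarrow> bool) \<Rightarrow> real"
  assumes "\<And>h g. F (h, g(i := \<not> g i)) = - F (h, g)"
  shows "(\<Sum>\<omega>\<in>UNIV. F \<omega>) = 0"
proof -
  define \<sigma> where "\<sigma> \<omega> = (fst \<omega>, (snd \<omega>)(i := \<not> snd \<omega> i))" for \<omega> :: "('n \<Rightarrow> 's) \<times> ('n \<Rightarrow> bool)"
  have inv: "\<sigma> (\<sigma> \<omega>) = \<omega>" for \<omega> by (auto simp: \<sigma>_def)
  have "(\<Sum>\<omega>\<in>UNIV. F \<omega>) = (\<Sum>\<omega>\<in>UNIV. F (\<sigma> \<omega>))"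
    by (rule sum.reindex_bij_witness[of _ \<sigma> \<sigma>]) (auto simp: inv)
  also have "\<dots> = (\<Sum>\<omega>\<in>UNIV. - F \<omega>)"
    by (rule sum.cong) (auto simp: \<sigma>_def assms)
  finally show ?thesis by (simp add: sum_negf)
qed

lemma count_collide:
  assumes "j \<noteq> k"
  shows "card {h :: 'n::finite \<Rightarrow> 's::finite. h j = h k} * CARD('s) = CARD('n \<Rightarrow> 's)"
proof -
  have "bij_betw (\<lambda>(h, t). h(j := t)) ({h :: 'n \<Rightarrow> 's. h j = h k} \<times> UNIV) UNIV"
    by (rule bij_betw_byWitness[where f' = "\<lambda>h'. (h'(j := h' k), h' j)"])
       (use assms in \<open>auto simp: fun_upd_idem\<close>)
  hence "card ({h :: 'n \<Rightarrow> 's. h j = h k} \<times> (UNIV :: 's set)) = CARD('n \<Rightarrow> 's)"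
    by (rule bij_betw_same_card)
  thus ?thesis by (simp add: card_cartesian_product)
qed

lemma sum_collide:
  assumes "j \<noteq> k"
  shows "(\<Sum>\<omega>\<in>(UNIV :: (('n::finite \<Rightarrow> 's::finite) \<times> ('n \<Rightarrow> bool)) set). if fst \<omega> j = fst \<omega> k then 1 else 0)
         = real CARD(('n \<Rightarrow> 's) \<times> ('n \<Rightarrow> bool)) / real CARD('s)"
proof -
  have "(\<Sum>\<omega>\<in>(UNIV :: (('n \<Rightarrow> 's) \<times> ('n \<Rightarrow> bool)) set). if fst \<omega> j = fst \<omega> k then 1 else (0::real))
      = real (card ({h :: 'n \<Rightarrow> 's. h j = h k} \<times> (UNIV :: ('n \<Rightarrow> bool) set)))"
  proof -
    have "{\<omega> :: ('n \<Rightarrow> 's) \<times> ('n \<Rightarrow> bool). fst \<omega> j = fst \<omega> k} = {h :: 'n \<Rightarrow> 's. h j = h k} \<times> (UNIV :: ('n \<Rightarrow> bool) set)"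
      by auto
    moreover have "(\<Sum>\<omega>\<in>(UNIV :: (('n \<Rightarrow> 's) \<times> ('n \<Rightarrow> bool)) set). if fst \<omega> j = fst \<omega> k then 1 else (0::real))
      = real (card {\<omega> :: ('n \<Rightarrow> 's) \<times> ('n \<Rightarrow> bool). fst \<omega> j = fst \<omega> k})"
      by (simp add: sum.If_cases)
    ultimately show ?thesis by simp
  qed
  also have "\<dots> = real (card {h :: 'n \<Rightarrow> 's. h j = h k}) * real CARD('n \<Rightarrow> bool)"
    by (simp add: card_cartesian_product)
  also have "\<dots> = real CARD(('n \<Rightarrow> 's) \<times> ('n \<Rightarrow> bool)) / real CARD('s)"
  proof -
    have "real (card {h :: 'n \<Rightarrow> 's. h j = h k}) * real CARD('s) = real CARD('n \<Rightarrow> 's)"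
      using count_collide[OF assms] by (metis of_nat_mult)
    moreover have "CARD(('n \<Rightarrow> 's) \<times> ('n \<Rightarrow> bool)) = CARD('n \<Rightarrow> 's) * CARD('n \<Rightarrow> bool)"
      by (simp add: UNIV_Times_UNIV[symmetric] card_cartesian_product del: UNIV_Times_UNIV)
    ultimately show ?thesis by (simp add: field_simps)
  qed
  finally show ?thesis .
qed


lemma sum_cc_cc:
  fixes j k j' k' :: "'n::finite"
  shows "(\<Sum>\<omega>\<in>(UNIV :: (('n \<Rightarrow> 's::finite) \<times> ('n \<Rightarrow> bool)) set). cc \<omega> j k * cc \<omega> j' k')
       = (if j \<noteq> k \<and> {j', k'} = {j, k} then real CARD(('n \<Rightarrow> 's) \<times> ('n \<Rightarrow> bool)) / real CARD('s) else 0)"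
proof (cases "{j', k'} = {j, k}")
  case True
  hence "cc \<omega> j' k' = cc \<omega> j k" for \<omega> :: "('n \<Rightarrow> 's) \<times> ('n \<Rightarrow> bool)"
    by (metis cc_sym doubleton_eq_iff)
  hence "(\<Sum>\<omega>\<in>(UNIV :: (('n \<Rightarrow> 's) \<times> ('n \<Rightarrow> bool)) set). cc \<omega> j k * cc \<omega> j' k')
       = (\<Sum>\<omega>\<in>(UNIV :: (('n \<Rightarrow> 's) \<times> ('n \<Rightarrow> bool)) set). if j \<noteq> k then (if fst \<omega> j = fst \<omega> k then 1 else 0) else 0)"
    by (intro sum.cong) (auto simp: cc_def sg_def)
  also have "\<dots> = (if j \<noteq> k \<and> {j', k'} = {j, k} then real CARD(('n \<Rightarrow> 's) \<times> ('n \<Rightarrow> bool)) / real CARD('s) else 0)"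
    using True sum_collide[of j k] by auto
  finally show ?thesis .
next
  case False
  then obtain i where i: "(i = j \<or> i = k) \<noteq> (i = j' \<or> i = k')" by blast
  have "(\<Sum>\<omega>\<in>(UNIV :: (('n \<Rightarrow> 's) \<times> ('n \<Rightarrow> bool)) set). cc \<omega> j k * cc \<omega> j' k') = 0"
    by (rule flip_sum_zero[of _ i]) (use i in \<open>auto simp: cc_flip\<close>)
  thus ?thesis using False by simp
qed

lemma sum_two:
  fixes f :: "'a::finite \<Rightarrow> real"
  assumes "p \<noteq> q"
  shows "(\<Sum>x\<in>UNIV. if x = p \<or> x = q then f x else 0) = (f p + f q :: real)"
proof -
  have "(\<Sum>x\<in>UNIV. if x = p \<or> x = q then f x else 0) = sum f {x \<in> UNIV. x = p \<or> x = q}"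
    by (rule sum.inter_filter[symmetric]) simp
  also have "sum f {x \<in> UNIV. x = p \<or> x = q} = sum f {p, q}" by (rule arg_cong[where f="sum f"]) auto
  finally show ?thesis using assms by simp
qed

lemma second_moment:
  fixes a :: "'n::finite \<times> 'n \<Rightarrow> real"
  shows "(\<Sum>\<omega>\<in>(UNIV :: (('n \<Rightarrow> 's::finite) \<times> ('n \<Rightarrow> bool)) set). (\<Sum>p\<in>UNIV. a p * cc \<omega> (fst p) (snd p))^2)
       = real CARD(('n \<Rightarrow> 's) \<times> ('n \<Rightarrow> bool)) / real CARD('s) *
         (\<Sum>p\<in>UNIV. if fst p \<noteq> snd p then a p * (a p + a (snd p, fst p)) else 0)"
proof -
  define N where "N = real CARD(('n \<Rightarrow> 's) \<times> ('n \<Rightarrow> bool)) / real CARD('s)"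
  have "(\<Sum>\<omega>\<in>(UNIV :: (('n \<Rightarrow> 's) \<times> ('n \<Rightarrow> bool)) set). (\<Sum>p\<in>UNIV. a p * cc \<omega> (fst p) (snd p))^2)
     = (\<Sum>\<omega>\<in>(UNIV :: (('n \<Rightarrow> 's) \<times> ('n \<Rightarrow> bool)) set). \<Sum>p\<in>UNIV. \<Sum>q\<in>UNIV. a p * a q * (cc \<omega> (fst p) (snd p) * cc \<omega> (fst q) (snd q)))"
    by (simp add: power2_eq_square sum_product algebra_simps)
  also have "\<dots> = (\<Sum>p\<in>UNIV. \<Sum>q\<in>UNIV. \<Sum>\<omega>\<in>(UNIV :: (('n \<Rightarrow> 's) \<times> ('n \<Rightarrow> bool)) set). a p * a q * (cc \<omega> (fst p) (snd p) * cc \<omega> (fst q) (snd q)))"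
    by (subst sum.swap) (subst (2) sum.swap, rule refl)
  also have "\<dots> = (\<Sum>p\<in>UNIV. \<Sum>q\<in>UNIV. a p * a q * (if fst p \<noteq> snd p \<and> {fst q, snd q} = {fst p, snd p} then N else 0))"
    unfolding N_def by (simp add: sum_distrib_left[symmetric] sum_cc_cc)
  also have "\<dots> = (\<Sum>p\<in>UNIV. N * (if fst p \<noteq> snd p then a p * (a p + a (snd p, fst p)) else 0))"
  proof (rule sum.cong[OF refl])
    fix p :: "'n \<times> 'n"
    obtain j k where p: "p = (j, k)" by (cases p)
    show "(\<Sum>q\<in>UNIV. a p * a q * (if fst p \<noteq> snd p \<and> {fst q, snd q} = {fst p, snd p} then N else 0))
        = N * (if fst p \<noteq> snd p then a p * (a p + a (snd p, fst p)) else 0)"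
    proof (cases "j = k")
      case True thus ?thesis using p by simp
    next
      case False
      have "(\<Sum>q\<in>UNIV. a p * a q * (if fst p \<noteq> snd p \<and> {fst q, snd q} = {fst p, snd p} then N else 0))
          = (\<Sum>q\<in>UNIV. if q = (j, k) \<or> q = (k, j) then a p * a q * N else 0)"
        using False p by (intro sum.cong) (auto simp: doubleton_eq_iff)
      also have "\<dots> = a p * a (j, k) * N + a p * a (k, j) * N"
        by (rule sum_two) (use False in simp)
      finally show ?thesis using False p by (simp add: algebra_simps)
    qed
  qed
  finally show ?thesis by (simp add: sum_distrib_left N_def)
qed



lemma swap3: "(\<Sum>a\<in>A. \<Sum>b\<in>B. \<Sum>c\<in>C. f a b c) = (\<Sum>c\<in>C. \<Sum>a\<in>A. \<Sum>b\<in>B. f a b c)"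
proof -
  have "(\<Sum>a\<in>A. \<Sum>b\<in>B. \<Sum>c\<in>C. f a b c) = (\<Sum>a\<in>A. \<Sum>c\<in>C. \<Sum>b\<in>B. f a b c)"
    by (rule sum.cong[OF refl], rule sum.swap)
  also have "\<dots> = (\<Sum>c\<in>C. \<Sum>a\<in>A. \<Sum>b\<in>B. f a b c)" by (rule sum.swap)
  finally show ?thesis .
qed

lemma sum_pairs2:
  "(\<Sum>p\<in>(UNIV :: ('a::finite \<times> 'b::finite) set). f p) = (\<Sum>j\<in>UNIV. \<Sum>k\<in>UNIV. (f (j, k) :: real))"
  by (simp add: sum.cartesian_product UNIV_Times_UNIV[symmetric] del: UNIV_Times_UNIV)

lemma W_sum_bound:
  fixes R :: "real^'n::finite^'m::finite"
  defines "P \<equiv> \<lambda>j k. \<Sum>m\<in>UNIV. R$m$j * R$m$k"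
  shows "(\<Sum>\<omega>\<in>(UNIV :: (('n \<Rightarrow> 's::finite) \<times> ('n \<Rightarrow> bool)) set).
            \<Sum>m\<in>UNIV. \<Sum>l\<in>UNIV. (\<Sum>p\<in>UNIV. (R$m$fst p * R$l$snd p) * cc \<omega> (fst p) (snd p))^2)
         \<le> real CARD(('n \<Rightarrow> 's) \<times> ('n \<Rightarrow> bool)) / real CARD('s) * (2 * (\<Sum>j\<in>UNIV. P j j)^2)"
proof -
  define N where "N = real CARD(('n \<Rightarrow> 's) \<times> ('n \<Rightarrow> bool)) / real CARD('s)"
  have N0: "N \<ge> 0" by (simp add: N_def)
  have "(\<Sum>\<omega>\<in>(UNIV :: (('n \<Rightarrow> 's) \<times> ('n \<Rightarrow> bool)) set).
            \<Sum>m\<in>UNIV. \<Sum>l\<in>UNIV. (\<Sum>p\<in>UNIV. (R$m$fst p * R$l$snd p) * cc \<omega> (fst p) (snd p))^2)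
      = (\<Sum>m\<in>UNIV. \<Sum>l\<in>UNIV. \<Sum>\<omega>\<in>(UNIV :: (('n \<Rightarrow> 's) \<times> ('n \<Rightarrow> bool)) set).
            (\<Sum>p\<in>UNIV. (R$m$fst p * R$l$snd p) * cc \<omega> (fst p) (snd p))^2)"
    by (rule trans[OF sum.swap], rule sum.cong[OF refl], rule sum.swap)
  also have "\<dots> = (\<Sum>m\<in>UNIV. \<Sum>l\<in>UNIV. N * (\<Sum>p\<in>UNIV. if fst p \<noteq> snd p then
          (R$m$fst p * R$l$snd p) * ((R$m$fst p * R$l$snd p) + (R$m$snd p * R$l$fst p)) else 0))"
  proof (intro sum.cong refl)
    fix m l
    show "(\<Sum>\<omega>\<in>(UNIV :: (('n \<Rightarrow> 's) \<times> ('n \<Rightarrow> bool)) set).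
            (\<Sum>p\<in>UNIV. (R$m$fst p * R$l$snd p) * cc \<omega> (fst p) (snd p))^2) =
          N * (\<Sum>p\<in>UNIV. if fst p \<noteq> snd p then
          (R$m$fst p * R$l$snd p) * ((R$m$fst p * R$l$snd p) + (R$m$snd p * R$l$fst p)) else 0)"
      using second_moment[of "\<lambda>p. R$m$fst p * R$l$snd p", where 's='s] unfolding N_def fst_conv snd_conv .
  qed
  also have "\<dots> = N * (\<Sum>p\<in>UNIV. \<Sum>m\<in>UNIV. \<Sum>l\<in>UNIV. if fst p \<noteq> snd p then
          (R$m$fst p * R$l$snd p) * ((R$m$fst p * R$l$snd p) + (R$m$snd p * R$l$fst p)) else 0)"
    by (simp only: sum_distrib_left[symmetric], rule arg_cong[where f="\<lambda>x. N * x"], rule swap3)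
  also have "\<dots> = N * (\<Sum>p\<in>UNIV. if fst p \<noteq> snd p then
          P (fst p) (fst p) * P (snd p) (snd p) + (P (fst p) (snd p))^2 else 0)"
  proof (intro arg_cong[where f="\<lambda>x. N * x"] sum.cong refl)
    fix p :: "'n \<times> 'n"
    obtain j k where p: "p = (j, k)" by (cases p)
    have "(\<Sum>m\<in>UNIV. \<Sum>l\<in>UNIV. (R$m$j * R$l$k) * ((R$m$j * R$l$k) + (R$m$k * R$l$j)))
        = P j j * P k k + (P j k)^2"
      unfolding P_def by (simp add: power2_eq_square sum_product sum.distrib algebra_simps)
    thus "(\<Sum>m\<in>UNIV. \<Sum>l\<in>UNIV. if fst p \<noteq> snd p then
          (R$m$fst p * R$l$snd p) * ((R$m$fst p * R$l$snd p) + (R$m$snd p * R$l$fst p)) else 0) =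
        (if fst p \<noteq> snd p then P (fst p) (fst p) * P (snd p) (snd p) + (P (fst p) (snd p))^2 else 0)"
      using p by simp
  qed
  also have "\<dots> \<le> N * (\<Sum>p\<in>UNIV. 2 * (P (fst p) (fst p) * P (snd p) (snd p)))"
  proof (intro mult_left_mono[OF _ N0] sum_mono)
    fix p :: "'n \<times> 'n"
    have Pnn: "P j j \<ge> 0" for j unfolding P_def by (intro sum_nonneg) simp
    have "(P j k)^2 \<le> P j j * P k k" for j k
      unfolding P_def using Cauchy_Schwarz_ineq_sum[of "\<lambda>m. R$m$j" "\<lambda>m. R$m$k" UNIV]
      by (simp add: power2_eq_square)
    thus "(if fst p \<noteq> snd p then P (fst p) (fst p) * P (snd p) (snd p) + (P (fst p) (snd p))^2 else 0)
        \<le> 2 * (P (fst p) (fst p) * P (snd p) (snd p))"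
      using Pnn[of "fst p"] Pnn[of "snd p"] by (auto intro: mult_nonneg_nonneg)
  qed
  also have "(\<Sum>p\<in>UNIV. 2 * (P (fst p) (fst p) * P (snd p) (snd p))) = 2 * (\<Sum>j\<in>UNIV. P j j)^2"
  proof -
    have "(\<Sum>p\<in>UNIV. 2 * (P (fst p) (fst p) * P (snd p) (snd p))) = (\<Sum>j\<in>UNIV. \<Sum>k\<in>UNIV. 2 * (P j j * P k k))"
      using sum_pairs2[of "\<lambda>p. 2 * (P (fst p) (fst p) * P (snd p) (snd p))"] by simp
    also have "\<dots> = 2 * ((\<Sum>j\<in>UNIV. P j j) * (\<Sum>k\<in>UNIV. P k k))"
      by (subst sum_product, simp only: sum_distrib_left)
    finally show ?thesis by (simp add: power2_eq_square)
  qed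
  finally show ?thesis unfolding N_def .
qed



lemma cs_ent: "countsketch h g $ i $ j = (if h j = i then sg (g j) else 0)"
  by (simp add: countsketch_def sg_def)

lemma cs_entry:
  fixes h :: "'n::finite \<Rightarrow> 's::finite" and g :: "'n \<Rightarrow> bool"
  shows "(transpose (countsketch h g) ** countsketch h g - mat 1) $ j $ k = cc (h, g) j k"
proof -
  have "(transpose (countsketch h g) ** countsketch h g) $ j $ k
      = (\<Sum>i\<in>UNIV. (if h j = i then sg (g j) else 0) * (if h k = i then sg (g k) else 0))"
    by (simp add: matrix_matrix_mult_def transpose_def cs_ent)
  also have "\<dots> = (\<Sum>i\<in>UNIV. if h j = i then (if h k = h j then sg (g j) * sg (g k) else 0) else 0)"
    by (intro sum.cong) auto
  also have "\<dots> = (if h k = h j then sg (g j) * sg (g k) else 0)" by simp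
  finally show ?thesis by (auto simp: mat_def cc_def)
qed

lemma Mm_entry:
  fixes R :: "real^'n::finite^'m::finite" and C :: "real^'n^'n"
  shows "(R ** C ** transpose R) $ m $ l = (\<Sum>p\<in>UNIV. (R$m$fst p * R$l$snd p) * C $ fst p $ snd p)"
proof -
  have "(R ** C ** transpose R) $ m $ l = (\<Sum>k\<in>UNIV. (\<Sum>j\<in>UNIV. R$m$j * C$j$k) * R$l$k)"
    by (simp add: matrix_matrix_mult_def transpose_def)
  also have "\<dots> = (\<Sum>k\<in>UNIV. \<Sum>j\<in>UNIV. (R$m$j * R$l$k) * C$j$k)"
    by (intro sum.cong refl, subst sum_distrib_right, intro sum.cong refl, simp)
  also have "\<dots> = (\<Sum>j\<in>UNIV. \<Sum>k\<in>UNIV. (R$m$j * R$l$k) * C$j$k)" by (rule sum.swap)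
  also have "\<dots> = (\<Sum>p\<in>UNIV. (R$m$fst p * R$l$snd p) * C $ fst p $ snd p)"
    by (simp add: sum_pairs2)
  finally show ?thesis .
qed

lemma trace_RtR:
  fixes Z :: "real^'d::finite^'n::finite"
  assumes "lam \<ge> 0" and AG: "(transpose Z ** Z + lam *\<^sub>R mat 1) ** G = mat 1" and symG: "transpose G = G"
  shows "(\<Sum>j\<in>UNIV. \<Sum>m\<in>UNIV. Rm Z lam G $ m $ j * Rm Z lam G $ m $ j) = trace (G ** (transpose Z ** Z))"
proof -
  let ?R = "Rm Z lam G"
  have "(\<Sum>j\<in>UNIV. \<Sum>m\<in>UNIV. ?R $ m $ j * ?R $ m $ j) = trace (transpose ?R ** ?R)"
    by (simp add: trace_def matrix_matrix_mult_def transpose_def)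
  also have "transpose ?R ** ?R = Z ** (G ** (transpose (Zh Z lam) ** Zh Z lam) ** G) ** transpose Z"
    unfolding Rm_def by (simp add: matrix_transpose_mul symG matrix_mul_assoc)
  also have "\<dots> = Z ** G ** transpose Z"
    using AG by (simp add: ZhZh[OF assms(1)] matrix_mul_assoc[symmetric])
  also have "trace (Z ** G ** transpose Z) = trace (G ** transpose Z ** Z)"
    by (metis matrix_mul_assoc trace_mul_sym)
  finally show ?thesis by (simp add: matrix_mul_assoc)
qed



lemma aux_close:
  fixes a b :: real
  assumes "\<bar>b - a\<bar> \<le> 1/3 * a"
  shows "(2/3) * a \<le> b" "b \<le> (4/3) * a"
  using assms abs_le_D1[OF assms] abs_le_D2[OF assms] by linarith+

lemma good_event:
  fixes Z :: "real^'d::finite^'n::finite" and S :: "real^'n^'s::finite"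
  assumes lam0: "lam \<ge> 0"
    and GA: "G ** (transpose Z ** Z + lam *\<^sub>R mat 1) = mat 1" and symG: "transpose G = G"
    and Apos: "\<And>v. v \<noteq> 0 \<Longrightarrow> v \<bullet> ((transpose Z ** Z + lam *\<^sub>R mat 1) *v v) > 0"
    and W: "Wm Z lam G (transpose S ** S - mat 1) \<le> 1/9"
  shows "pos_def (transpose Z ** transpose S ** S ** Z + lam *\<^sub>R mat 1) \<and>
         gen_eigenvalues (transpose Z ** Z + lam *\<^sub>R mat 1) (transpose Z ** transpose S ** S ** Z + lam *\<^sub>R mat 1) \<subseteq> {1/2 .. 3/2} \<and>
         pencil_kappa (transpose Z ** Z + lam *\<^sub>R mat 1) (transpose Z ** transpose S ** S ** Z + lam *\<^sub>R mat 1) \<le> 3"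
proof -
  define A where "A = transpose Z ** Z + lam *\<^sub>R mat 1"
  define B where "B = transpose Z ** transpose S ** S ** Z + lam *\<^sub>R mat 1"
  define C where "C = transpose S ** S - mat 1"
  have symA: "transpose A = A"
    unfolding A_def by (simp add: transpose_plus transpose_scalar matrix_transpose_mul)
  have symB: "transpose B = B"
    unfolding B_def by (simp add: transpose_plus transpose_scalar matrix_transpose_mul matrix_mul_assoc)
  have Anneg: "v \<bullet> (A *v v) \<ge> 0" for v
    using Apos[of v] unfolding A_def by (cases "v = 0") auto
  have close: "\<bar>v \<bullet> (B *v v) - v \<bullet> (A *v v)\<bar> \<le> (1/3) * (v \<bullet> (A *v v))" for v
  proof -
    let ?y = "Zh Z lam *v v"
    have d: "v \<bullet> (B *v v) - v \<bullet> (A *v v) = ?y \<bullet> (Mm Z lam G C *v ?y)"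
      unfolding A_def B_def C_def using B_minus_A[where Z=Z and S=S and lam=lam and v=v] key_quad[OF lam0 GA symG] by simp
    have yy: "?y \<bullet> ?y = v \<bullet> (A *v v)" unfolding A_def by (rule quad_ZhZh[OF lam0])
    have "(?y \<bullet> (Mm Z lam G C *v ?y))^2 \<le> Wm Z lam G C * (?y \<bullet> ?y)^2"
      unfolding Wm_def by (rule quad_CS)
    also have "\<dots> \<le> (1/9) * (?y \<bullet> ?y)^2"
      using W unfolding C_def by (intro mult_right_mono) auto
    also have "\<dots> = ((1/3) * (v \<bullet> (A *v v)))^2" using yy by (simp add: power2_eq_square)
    finally have "\<bar>v \<bullet> (B *v v) - v \<bullet> (A *v v)\<bar>^2 \<le> ((1/3) * (v \<bullet> (A *v v)))^2"
      using d by simp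
    thus ?thesis by (rule power2_le_imp_le) (use Anneg[of v] in simp)
  qed
  have Bpos: "v \<noteq> 0 \<Longrightarrow> v \<bullet> (B *v v) > 0" for v
  proof -
    assume "v \<noteq> 0"
    hence "v \<bullet> (A *v v) > 0" using Apos[of v] unfolding A_def by simp
    moreover have "\<bar>v \<bullet> (B *v v) - v \<bullet> (A *v v)\<bar> \<le> (1/3) * (v \<bullet> (A *v v))" by (rule close)
    ultimately show ?thesis using aux_close(1)[of "v \<bullet> (B *v v)" "v \<bullet> (A *v v)"] by linarith
  qed
  have pdB: "pos_def B" unfolding pos_def_def using symB Bpos by blast
  have eig: "gen_eigenvalues A B \<subseteq> {3/4 .. 3/2}"
  proof
    fix \<mu> assume "\<mu> \<in> gen_eigenvalues A B"
    then obtain v where v: "v \<noteq> 0" "A *v v = \<mu> *\<^sub>R (B *v v)" unfolding gen_eigenvalues_def by blast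
    define a where "a = v \<bullet> (A *v v)"
    define b where "b = v \<bullet> (B *v v)"
    have ab: "a = \<mu> * b" unfolding a_def b_def using v(2) by simp
    have a0: "a > 0" using Apos[OF v(1)] unfolding a_def A_def by simp
    have b0: "b > 0" using Bpos[OF v(1)] unfolding b_def by simp
    have "\<bar>b - a\<bar> \<le> (1/3) * a" using close[of v] unfolding a_def b_def .
    hence lo: "(2/3) * a \<le> b" and hi: "b \<le> (4/3) * a" using aux_close by blast+
    have "(3/4) * b \<le> \<mu> * b" using hi ab by simp
    hence m1: "3/4 \<le> \<mu>" using b0 by (simp add: mult_le_cancel_right)
    have "\<mu> * b \<le> (3/2) * b" using lo ab by simp
    hence m2: "\<mu> \<le> 3/2" using b0 by (simp add: mult_le_cancel_right)
    show "\<mu> \<in> {3/4 .. 3/2}" using m1 m2 by simp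
  qed
  have fin: "finite (gen_eigenvalues A B)" by (rule pencil_finite[OF symA pdB])
  have ne: "gen_eigenvalues A B \<noteq> {}" by (rule pencil_nonempty[OF symA pdB])
  have absE: "x \<in> abs ` gen_eigenvalues A B \<Longrightarrow> 3/4 \<le> x \<and> x \<le> 3/2" for x
    using eig by auto
  have finA: "finite (abs ` gen_eigenvalues A B)" and neA: "abs ` gen_eigenvalues A B \<noteq> {}"
    using fin ne by auto
  have mx: "Max (abs ` gen_eigenvalues A B) \<le> 3/2"
    using absE finA neA by (simp add: Max_le_iff)
  have mn: "Min (abs ` gen_eigenvalues A B) \<ge> 3/4"
    using absE finA neA by (simp add: Min_ge_iff)
  have "pencil_kappa A B \<le> (3/2) / (3/4)"
    unfolding pencil_kappa_def by (rule frac_le) (use mx mn in auto)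
  hence "pencil_kappa A B \<le> 3" by simp
  moreover have "gen_eigenvalues A B \<subseteq> {1/2 .. 3/2}" using eig by auto
  ultimately show ?thesis using pdB unfolding A_def B_def by blast
qed



theorem lemma3p1:
  fixes Z :: "real^'d::finite^'n::finite" and lam \<delta> :: real
  assumes "lam \<ge> 0"
    and "lam > 0 \<or> rank Z = CARD('d)"
    and "0 < \<delta>" and "\<delta> < 1"
    and "real CARD('s::finite) \<ge> 20 * (stat_dim Z lam)^2 / \<delta>"
  shows "measure_pmf.prob (countsketch_pmf :: (('n \<Rightarrow> 's) \<times> ('n \<Rightarrow> bool)) pmf)
           {(h, g). let S = countsketch h g;
                        A = transpose Z ** Z + lam *\<^sub>R mat 1;
                        B = transpose Z ** transpose S ** S ** Z + lam *\<^sub>R mat 1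
                    in pos_def B \<and> gen_eigenvalues A B \<subseteq> {1/2 .. 3/2} \<and> pencil_kappa A B \<le> 3}
         \<ge> 1 - \<delta>"
proof -
  note lam0 = assms(1)
  define A where "A = transpose Z ** Z + lam *\<^sub>R mat 1"
  have symA: "transpose A = A"
    unfolding A_def by (simp add: transpose_plus transpose_scalar matrix_transpose_mul)
  have Zh1: "(Zh Z lam *v v) $ Inl j = (Z *v v) $ j" for v j
    by (simp add: Zh_def matrix_vector_mult_def)
  have Zh2: "(Zh Z lam *v v) $ Inr b = sqrt lam * v $ b" for v b
  proof -
    have "(Zh Z lam *v v) $ Inr b = (\<Sum>a\<in>UNIV. (if a = b then sqrt lam else 0) * v $ a)"
      by (simp add: Zh_def matrix_vector_mult_def)
    also have "\<dots> = (\<Sum>a\<in>UNIV. if a = b then sqrt lam * v $ a else 0)"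
      by (intro sum.cong) auto
    also have "\<dots> = sqrt lam * v $ b" by simp
    finally show ?thesis .
  qed
  have Apos: "v \<bullet> (A *v v) > 0" if v0: "v \<noteq> 0" for v
  proof -
    have "Zh Z lam *v v \<noteq> 0"
    proof (cases "lam > 0")
      case True
      obtain b where "v $ b \<noteq> 0" using v0 by (metis vec_eq_iff zero_index)
      hence "(Zh Z lam *v v) $ Inr b \<noteq> 0" using True by (simp add: Zh2)
      thus ?thesis by auto
    next
      case False
      hence "rank Z = CARD('d)" using assms(2) by simp
      hence "inj ((*v) Z)" by (simp add: full_rank_injective)
      hence "Z *v v \<noteq> 0" using v0 by (metis injD matrix_vector_mult_0_right)
      then obtain j where "(Z *v v) $ j \<noteq> 0" by (metis vec_eq_iff zero_index)
      hence "(Zh Z lam *v v) $ Inl j \<noteq> 0" by (simp add: Zh1)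
      thus ?thesis by auto
    qed
    hence "(Zh Z lam *v v) \<bullet> (Zh Z lam *v v) > 0" by simp
    thus ?thesis using quad_ZhZh[OF lam0, of Z v] unfolding A_def by simp
  qed
  have "\<exists>G'. G' ** A = mat 1"
    unfolding matrix_left_invertible_ker
  proof (intro allI impI)
    fix x assume "A *v x = 0"
    hence "x \<bullet> (A *v x) = 0" by simp
    thus "x = 0" using Apos[of x] by (cases "x = 0") auto
  qed
  then obtain G' where G'1: "G' ** A = mat 1" by blast
  hence G'2: "A ** G' = mat 1" by (simp add: matrix_left_right_inverse)
  define G where "G = matrix_inv A"
  have AGboth: "A ** G = mat 1 \<and> G ** A = mat 1"
    unfolding G_def matrix_inv_def by (rule someI[of _ G']) (use G'1 G'2 in auto)
  hence AG: "A ** G = mat 1" and GA: "G ** A = mat 1" by auto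
  have symG: "transpose G = G"
  proof -
    have "transpose (G ** A) = mat 1" using GA by simp
    hence AGt: "A ** transpose G = mat 1" using symA by (simp add: matrix_transpose_mul)
    have "transpose G = (G ** A) ** transpose G" using GA by simp
    also have "\<dots> = G ** (A ** transpose G)" by (simp add: matrix_mul_assoc)
    also have "\<dots> = G" using AGt by simp
    finally show ?thesis .
  qed
  define R where "R = Rm Z lam G"
  have sd: "stat_dim Z lam = (\<Sum>j\<in>UNIV. \<Sum>m\<in>UNIV. R $ m $ j * R $ m $ j)"
  proof -
    have AG': "(transpose Z ** Z + lam *\<^sub>R mat 1) ** G = mat 1" using AG unfolding A_def .
    have "stat_dim Z lam = trace (G ** (transpose Z ** Z))" unfolding stat_dim_def G_def A_def ..
    thus ?thesis unfolding R_def using trace_RtR[OF lam0 AG' symG] by simp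
  qed
  define N where "N = real CARD(('n \<Rightarrow> 's) \<times> ('n \<Rightarrow> bool))"
  define s where "s = real CARD('s)"
  have N0: "N > 0" unfolding N_def by simp
  have s0: "s > 0" unfolding s_def by simp
  define W where "W \<omega> = Wm Z lam G (transpose (countsketch (fst \<omega>) (snd \<omega>)) ** countsketch (fst \<omega>) (snd \<omega>) - mat 1)"
    for \<omega> :: "('n \<Rightarrow> 's) \<times> ('n \<Rightarrow> bool)"
  have W_eq: "W \<omega> = (\<Sum>m\<in>UNIV. \<Sum>l\<in>UNIV. (\<Sum>p\<in>UNIV. (R$m$fst p * R$l$snd p) * cc \<omega> (fst p) (snd p))^2)" for \<omega>
  proof -
    obtain h g where \<omega>: "\<omega> = (h, g)" by (cases \<omega>)
    show ?thesis unfolding W_def Wm_def Mm_def R_def[symmetric] Mm_entry \<omega> cs_entry by simp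
  qed
  have Wsum: "(\<Sum>\<omega>\<in>UNIV. W \<omega>) \<le> N / s * (2 * (stat_dim Z lam)^2)"
    unfolding W_eq N_def s_def sd using W_sum_bound[of R, where 's='s] by simp
  have W0: "W \<omega> \<ge> 0" for \<omega> unfolding W_def Wm_def by (intro sum_nonneg) simp
  define bad where "bad = {\<omega>. W \<omega> > 1/9}"
  have "real (card bad) * (1/9) = (\<Sum>\<omega>\<in>bad. 1/9)" by simp
  also have "\<dots> \<le> (\<Sum>\<omega>\<in>bad. W \<omega>)" by (intro sum_mono) (simp add: bad_def)
  also have "\<dots> \<le> (\<Sum>\<omega>\<in>UNIV. W \<omega>)" by (intro sum_mono2) (auto simp: W0)
  also have "\<dots> \<le> N / s * (2 * (stat_dim Z lam)^2)" by (rule Wsum)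
  finally have cb: "real (card bad) \<le> 18 * N * ((stat_dim Z lam)^2 / s)" by simp
  have "20 * (stat_dim Z lam)^2 \<le> s * \<delta>"
    using assms(5) assms(3) unfolding s_def by (simp add: divide_le_eq)
  hence "(stat_dim Z lam)^2 / s \<le> \<delta> / 20" using s0 by (simp add: field_simps)
  hence "18 * N * ((stat_dim Z lam)^2 / s) \<le> 18 * N * (\<delta> / 20)"
    using N0 by (intro mult_left_mono) auto
  hence cb2: "real (card bad) \<le> N * (9/10 * \<delta>)"
    using cb by simp
  define E :: "(('n \<Rightarrow> 's) \<times> ('n \<Rightarrow> bool)) set" where "E = {(h, g). let S = countsketch h g;
                        A = transpose Z ** Z + lam *\<^sub>R mat 1;
                        B = transpose Z ** transpose S ** S ** Z + lam *\<^sub>R mat 1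
                    in pos_def B \<and> gen_eigenvalues A B \<subseteq> {1/2 .. 3/2} \<and> pencil_kappa A B \<le> 3}"
  have sub: "UNIV - bad \<subseteq> E"
  proof
    fix \<omega> assume "\<omega> \<in> UNIV - bad"
    hence Wl: "W \<omega> \<le> 1/9" by (simp add: bad_def)
    obtain h g where \<omega>: "\<omega> = (h, g)" by (cases \<omega>)
    have GA': "G ** (transpose Z ** Z + lam *\<^sub>R mat 1) = mat 1" using GA unfolding A_def .
    have Apos': "\<And>v. v \<noteq> 0 \<Longrightarrow> v \<bullet> ((transpose Z ** Z + lam *\<^sub>R mat 1) *v v) > 0"
      using Apos unfolding A_def by blast
    have "Wm Z lam G (transpose (countsketch h g) ** countsketch h g - mat 1) \<le> 1/9"
      using Wl unfolding W_def \<omega> by simp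
    from good_event[OF lam0 GA' symG Apos' this]
    show "\<omega> \<in> E" unfolding E_def \<omega> Let_def by simp
  qed
  have cbU: "card bad \<le> CARD(('n \<Rightarrow> 's) \<times> ('n \<Rightarrow> bool))" by (rule card_mono) auto
  have "card (UNIV - bad) = CARD(('n \<Rightarrow> 's) \<times> ('n \<Rightarrow> bool)) - card bad"
    by (rule card_Diff_subset) auto
  hence e1: "real (card (UNIV - bad)) = N - real (card bad)"
    unfolding N_def using cbU by (simp only: of_nat_diff)
  have "real (card (UNIV - bad)) \<le> real (card E)" using card_mono[OF _ sub] by simp
  hence cE: "N - real (card bad) \<le> real (card E)" using e1 by simp
  have "measure_pmf.prob (countsketch_pmf :: (('n \<Rightarrow> 's) \<times> ('n \<Rightarrow> bool)) pmf) E = real (card E) / N"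
    unfolding countsketch_pmf_def N_def by (simp add: measure_pmf_of_set)
  also have "\<dots> \<ge> (N - N * (9/10 * \<delta>)) / N"
    using cE cb2 N0 by (intro divide_right_mono) auto
  also have "(N - N * (9/10 * \<delta>)) / N = 1 - 9/10 * \<delta>"
    using N0 by (simp add: diff_divide_distrib)
  finally have "measure_pmf.prob (countsketch_pmf :: (('n \<Rightarrow> 's) \<times> ('n \<Rightarrow> bool)) pmf) E \<ge> 1 - 9/10 * \<delta>" .
  thus ?thesis unfolding E_def using assms(3) by simp
qed

end
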